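(* Let $s\in(0,1]$, $\lambda>0$, $\sigma\ge d/2+6$, and let $f$ be a function on $\mathbb{T}^d\times\mathbb{R}^d$ with spatial density $\rho=\int f\,dv$ (Fourier coefficients $\rho_l$). For a multi-index $\alpha$, set $$E^2_{NL}=\sum_{k\in\mathbb{Z}^d}\int_{\mathbb{R}^d}A_k(\eta)D^\alpha_\eta\overline{\hat f_k(\eta)}\;A_k(\eta)\Big[\sum_{|j|=1,\,j\le\alpha}\ \sum_{l\in\mathbb{Z}^d\setminus\{0\}}\rho_l\widehat W(l)\,l_j\,D^{\alpha-j}_\eta\hat f_{k-l}(\eta)\Big]d\eta,$$ where $j$ ranges over unit multi-indices with $j\le\alpha$ componentwise and $l_j$ is the corresponding component of $l$. Then $$|E^2_{NL}|\lesssim\|v^\alpha f\|_{\lambda,\sigma}\,\|\rho\|_{\lambda,\sigma;s}\sum_{|j|=1,\,j\le\alpha}\|v^{\alpha-j}f\|_{\lambda,\sigma},$$ with an implicit constant depending only on $d,\sigma,s$ and $W$.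
   Context: $\hat f_k(\eta)=(2\pi)^{-d}\int e^{-ix\cdot k-iv\cdot\eta}f\,dx\,dv$, $\rho_l=(2\pi)^{-d}\int_{\mathbb{T}^d}e^{-ix\cdot l}\rho\,dx$, $\langle k,\eta\rangle=(1+|k|^2+|\eta|^2)^{1/2}$, $\langle k\rangle=(1+|k|^2)^{1/2}$, $A_k(\eta)=\langle k,\eta\rangle^\sigma e^{\lambda\langle k,\eta\rangle^s}$. $W$ is the Coulomb or Newtonian potential on $\mathbb{T}^d$, with $|\widehat W(l)|\le C_W|l|^{-2}$ for $l\ne0$. $\|v^\alpha f\|_{\lambda,\sigma}^2=\sum_{k}\int|D^\alpha_\eta\hat f_k(\eta)|^2\langle k,\eta\rangle^{2\sigma}e^{2\lambda\langle k,\eta\rangle^s}d\eta$; $\|\rho\|_{\lambda,\sigma;s}^2=\sum_k|\rho_k|^2\langle k\rangle^{2\sigma}e^{2\lambda\langle k\rangle^s}$. *)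

theory Defs
  imports "HOL-Analysis.Analysis"
begin

text \<open>Dimension d = CARD('n). Frequencies k in Z^d are int^'n, eta, x, v in R^d are real^'n.\<close>

definition torus_box :: "(real^'n) set" where
  "torus_box = cbox 0 (\<chi> i. 2 * pi)"

definition dotZ :: "real^'n \<Rightarrow> int^'n \<Rightarrow> real" where
  "dotZ x k = (\<Sum>i\<in>UNIV. x$i * of_int (k$i))"

definition fhat :: "(real^'n \<Rightarrow> real^'n \<Rightarrow> real) \<Rightarrow> int^'n \<Rightarrow> real^'n \<Rightarrow> complex" where
  "fhat f k eta = complex_of_real ((1 / (2*pi)) ^ CARD('n)) *
     (LINT x : torus_box | lborel. (LINT v | lborel.
        cis (- (dotZ x k + inner v eta)) * complex_of_real (f x v)))"

definition density :: "(real^'n \<Rightarrow> real^'n \<Rightarrow> real) \<Rightarrow> real^'n \<Rightarrow> real" where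
  "density f x = (LINT v | lborel. f x v)"

definition rhohat :: "(real^'n \<Rightarrow> real^'n \<Rightarrow> real) \<Rightarrow> int^'n \<Rightarrow> complex" where
  "rhohat f l = complex_of_real ((1 / (2*pi)) ^ CARD('n)) *
     (LINT x : torus_box | lborel. cis (- dotZ x l) * complex_of_real (density f x))"

definition jbr2 :: "int^'n \<Rightarrow> real^'n \<Rightarrow> real" where
  "jbr2 k eta = sqrt (1 + (\<Sum>i\<in>UNIV. (of_int (k$i))^2) + (\<Sum>i\<in>UNIV. (eta$i)^2))"

definition jbr :: "int^'n \<Rightarrow> real" where
  "jbr k = sqrt (1 + (\<Sum>i\<in>UNIV. (of_int (k$i))^2))"

definition Aw :: "real \<Rightarrow> real \<Rightarrow> real \<Rightarrow> int^'n \<Rightarrow> real^'n \<Rightarrow> real" where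
  "Aw lam sig s k eta = jbr2 k eta powr sig * exp (lam * jbr2 k eta powr s)"

definition normsqZ :: "int^'n \<Rightarrow> real" where
  "normsqZ l = (\<Sum>i\<in>UNIV. (of_int (l$i))^2)"

definition unit_mi :: "'n \<Rightarrow> nat^'n" where
  "unit_mi i = (\<chi> m. if m = i then 1 else 0)"

definition mi_le :: "nat^'n \<Rightarrow> nat^'n \<Rightarrow> bool" where
  "mi_le a b = (\<forall>i. a$i \<le> b$i)"

definition mi_add :: "nat^'n \<Rightarrow> nat^'n \<Rightarrow> nat^'n" where
  "mi_add a b = (\<chi> i. a$i + b$i)"

definition mi_sub_unit :: "nat^'n \<Rightarrow> 'n \<Rightarrow> nat^'n" where
  "mi_sub_unit a i = (\<chi> m. if m = i then a$m - 1 else a$m)"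

definition gnorm_sq :: "real \<Rightarrow> real \<Rightarrow> real \<Rightarrow> (int^'n \<Rightarrow> real^'n \<Rightarrow> complex) \<Rightarrow> real" where
  "gnorm_sq lam sig s g =
     (\<Sum>\<^sub>\<infinity>k. (LINT eta | lborel. (cmod (g k eta))^2 * (Aw lam sig s k eta)^2))"

definition rho_norm_sq :: "real \<Rightarrow> real \<Rightarrow> real \<Rightarrow> (int^'n \<Rightarrow> complex) \<Rightarrow> real" where
  "rho_norm_sq lam sig s r =
     (\<Sum>\<^sub>\<infinity>k. (cmod (r k))^2 * (jbr k powr sig * exp (lam * jbr k powr s))^2)"

text \<open>Df is the family of derivatives: Df beta k eta = D^beta_eta fhat_k(eta) for beta <= alpha.\<close>
definition is_deriv_family ::
  "nat^'n \<Rightarrow> (real^'n \<Rightarrow> real^'n \<Rightarrow> real) \<Rightarrow> (nat^'n \<Rightarrow> int^'n \<Rightarrow> real^'n \<Rightarrow> complex) \<Rightarrow> bool" where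
  "is_deriv_family alpha f Df \<longleftrightarrow>
     Df 0 = fhat f \<and>
     (\<forall>beta i k eta. mi_le (mi_add beta (unit_mi i)) alpha \<longrightarrow>
        ((\<lambda>t. Df beta k (eta + t *\<^sub>R axis i 1)) has_vector_derivative
            Df (mi_add beta (unit_mi i)) k eta) (at 0))"

definition E_NL ::
  "real \<Rightarrow> real \<Rightarrow> real \<Rightarrow> (int^'n \<Rightarrow> complex) \<Rightarrow> (int^'n \<Rightarrow> complex) \<Rightarrow> nat^'n \<Rightarrow>
   (nat^'n \<Rightarrow> int^'n \<Rightarrow> real^'n \<Rightarrow> complex) \<Rightarrow> complex" where
  "E_NL lam sig s rho What alpha Df =
     (\<Sum>\<^sub>\<infinity>k. (LINT eta | lborel.
        complex_of_real (Aw lam sig s k eta) * cnj (Df alpha k eta) *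
        complex_of_real (Aw lam sig s k eta) *
        (\<Sum>i\<in>{i. 1 \<le> alpha$i}.
           (\<Sum>\<^sub>\<infinity>l\<in>UNIV - {0}. rho l * What l * of_int (l$i) *
                Df (mi_sub_unit alpha i) (k - l) eta))))"

end

theory Submission
  imports Defs "HOL-Library.FuncSet"
begin


lemma ennreal_infsum_nn:
  fixes f :: "'a \<Rightarrow> real"
  assumes "f summable_on A" "\<And>x. x\<in>A \<Longrightarrow> f x \<ge> 0"
  shows "ennreal (infsum f A) = (\<integral>\<^sup>+x. ennreal (f x) \<partial>count_space A)"
proof -
  have "(\<lambda>x. norm (f x)) summable_on A"
    using assms by (subst summable_on_cong[where g=f]) auto
  hence a: "Infinite_Set_Sum.abs_summable_on f A" using abs_summable_equivalent by blast
  show ?thesis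
    using nn_integral_conv_infsetsum[OF a assms(2)] infsetsum_infsum[OF a] by simp
qed

lemma norm_infsum_nn:
  fixes f :: "'a \<Rightarrow> complex"
  shows "ennreal (norm (infsum f A)) \<le> (\<integral>\<^sup>+x. ennreal (norm (f x)) \<partial>count_space A)"
proof (cases "f summable_on A")
  case True
  hence a: "(\<lambda>x. norm (f x)) summable_on A"
    using summable_on_iff_abs_summable_on_complex by blast
  have "norm (infsum f A) \<le> infsum (\<lambda>x. norm (f x)) A"
    by (rule norm_infsum_bound) (use a in auto)
  hence "ennreal (norm (infsum f A)) \<le> ennreal (infsum (\<lambda>x. norm (f x)) A)"
    by (rule ennreal_leI)
  also have "\<dots> = (\<integral>\<^sup>+x. ennreal (norm (f x)) \<partial>count_space A)"
    by (rule ennreal_infsum_nn[OF a]) auto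
  finally show ?thesis .
next
  case False
  then show ?thesis by (simp add: infsum_not_exists)
qed

lemma norm_integral_nn:
  fixes f :: "'a \<Rightarrow> complex"
  shows "ennreal (norm (integral\<^sup>L M f)) \<le> (\<integral>\<^sup>+x. ennreal (norm (f x)) \<partial>M)"
proof (cases "integrable M f")
  case True
  then show ?thesis using integral_norm_bound_ennreal by blast
next
  case False
  then show ?thesis by (simp add: not_integrable_integral_eq)
qed

lemma meas_count2:
  fixes F :: "'b \<Rightarrow> 'a::countable \<Rightarrow> ennreal"
  assumes "\<And>l. (\<lambda>x. F x l) \<in> borel_measurable M"
  shows "(\<lambda>x. \<integral>\<^sup>+l. F x l \<partial>count_space UNIV) \<in> borel_measurable M"
proof -
  interpret sigma_finite_measure "count_space (UNIV::'a set)"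
    by (rule sigma_finite_measure_count_space_countable) simp
  have "case_prod F \<in> borel_measurable (M \<Otimes>\<^sub>M count_space UNIV)"
  proof -
    have "(\<lambda>z. (\<lambda>l z. F (fst z) l) (snd z) z) \<in> borel_measurable (M \<Otimes>\<^sub>M count_space UNIV)"
      by (rule measurable_compose_countable'[where I=UNIV]) (use assms in auto)
    thus ?thesis by (simp add: case_prod_beta')
  qed
  thus ?thesis by (rule borel_measurable_nn_integral)
qed



abbreviation "CS \<equiv> count_space UNIV"

lemma swap_cs:
  "(\<integral>\<^sup>+x. \<integral>\<^sup>+y. f x y \<partial>CS \<partial>CS) = (\<integral>\<^sup>+y. \<integral>\<^sup>+x. f x y \<partial>CS \<partial>CS)"
  using nn_integral_fst_count_space[of "case_prod f"] nn_integral_snd_count_space[of "case_prod f"]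
  by simp

lemma shift_cs:
  fixes f :: "'a::ab_group_add \<Rightarrow> ennreal"
  shows "(\<integral>\<^sup>+k. f (k - l) \<partial>CS) = (\<integral>\<^sup>+k. f k \<partial>CS)"
proof -
  have "bij_betw (\<lambda>k. k - l) UNIV (UNIV::'a set)"
    by (rule bij_betwI[where g="\<lambda>k. k + l"]) auto
  thus ?thesis by (rule nn_integral_bij_count_space)
qed

lemma young:
  fixes p q :: "'a::ab_group_add \<Rightarrow> ennreal"
  shows "(\<integral>\<^sup>+k. (\<integral>\<^sup>+l. p l * q (k - l) \<partial>CS)\<^sup>2 \<partial>CS) \<le> (\<integral>\<^sup>+l. p l \<partial>CS)\<^sup>2 * (\<integral>\<^sup>+k. (q k)\<^sup>2 \<partial>CS)"
proof -
  define Q where "Q = (\<integral>\<^sup>+k. (q k)\<^sup>2 \<partial>CS)"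
  have sq: "(\<integral>\<^sup>+l. p l * q (k - l) \<partial>CS)\<^sup>2 = (\<integral>\<^sup>+l. \<integral>\<^sup>+m. p l * q (k - l) * (p m * q (k - m)) \<partial>CS \<partial>CS)" for k
    by (simp add: power2_eq_square nn_integral_cmult nn_integral_multc)
  have pt: "2 * (\<integral>\<^sup>+l. p l * q (k - l) \<partial>CS)\<^sup>2 \<le>
      (\<integral>\<^sup>+l. \<integral>\<^sup>+m. p l * p m * ((q (k - l))\<^sup>2 + (q (k - m))\<^sup>2) \<partial>CS \<partial>CS)" for k
  proof -
    have "2 * (\<integral>\<^sup>+l. p l * q (k - l) \<partial>CS)\<^sup>2 = (\<integral>\<^sup>+l. \<integral>\<^sup>+m. p l * p m * (2 * q (k - l) * q (k - m)) \<partial>CS \<partial>CS)"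
      unfolding sq by (simp add: nn_integral_cmult[symmetric] mult_ac)
    also have "\<dots> \<le> (\<integral>\<^sup>+l. \<integral>\<^sup>+m. p l * p m * ((q (k - l))\<^sup>2 + (q (k - m))\<^sup>2) \<partial>CS \<partial>CS)"
      by (intro nn_integral_mono mult_left_mono sum_of_squares_ge_ennreal) auto
    finally show ?thesis .
  qed
  have "2 * (\<integral>\<^sup>+k. (\<integral>\<^sup>+l. p l * q (k - l) \<partial>CS)\<^sup>2 \<partial>CS) = (\<integral>\<^sup>+k. 2 * (\<integral>\<^sup>+l. p l * q (k - l) \<partial>CS)\<^sup>2 \<partial>CS)"
    by (simp add: nn_integral_cmult)
  also have "\<dots> \<le> (\<integral>\<^sup>+k. \<integral>\<^sup>+l. \<integral>\<^sup>+m. p l * p m * ((q (k - l))\<^sup>2 + (q (k - m))\<^sup>2) \<partial>CS \<partial>CS \<partial>CS)"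
    by (intro nn_integral_mono pt)
  also have "\<dots> = (\<integral>\<^sup>+l. \<integral>\<^sup>+k. \<integral>\<^sup>+m. p l * p m * ((q (k - l))\<^sup>2 + (q (k - m))\<^sup>2) \<partial>CS \<partial>CS \<partial>CS)"
    by (rule swap_cs)
  also have "\<dots> = (\<integral>\<^sup>+l. \<integral>\<^sup>+m. \<integral>\<^sup>+k. p l * p m * ((q (k - l))\<^sup>2 + (q (k - m))\<^sup>2) \<partial>CS \<partial>CS \<partial>CS)"
    by (intro nn_integral_cong swap_cs)
  also have "\<dots> = (\<integral>\<^sup>+l. \<integral>\<^sup>+m. p l * p m * (Q + Q) \<partial>CS \<partial>CS)"
  proof (intro nn_integral_cong)
    fix l m
    have "(\<integral>\<^sup>+k. p l * p m * ((q (k - l))\<^sup>2 + (q (k - m))\<^sup>2) \<partial>CS)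
        = p l * p m * ((\<integral>\<^sup>+k. (q (k - l))\<^sup>2 \<partial>CS) + (\<integral>\<^sup>+k. (q (k - m))\<^sup>2 \<partial>CS))"
      by (simp add: nn_integral_cmult nn_integral_add)
    also have "\<dots> = p l * p m * (Q + Q)"
      unfolding Q_def using shift_cs[of "\<lambda>k. (q k)\<^sup>2"] by simp
    finally show "(\<integral>\<^sup>+k. p l * p m * ((q (k - l))\<^sup>2 + (q (k - m))\<^sup>2) \<partial>CS) = p l * p m * (Q + Q)" .
  qed
  also have "\<dots> = (\<integral>\<^sup>+l. (2*Q*p l) * (\<integral>\<^sup>+m. p m \<partial>CS) \<partial>CS)"
  proof (intro nn_integral_cong)
    fix l
    have "(\<integral>\<^sup>+m. p l * p m * (Q + Q) \<partial>CS) = (\<integral>\<^sup>+m. (2*Q*p l) * p m \<partial>CS)"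
      by (intro nn_integral_cong) (simp add: mult_2[symmetric] mult_ac)
    also have "\<dots> = (2*Q*p l) * (\<integral>\<^sup>+m. p m \<partial>CS)" by (rule nn_integral_cmult) simp
    finally show "(\<integral>\<^sup>+m. p l * p m * (Q + Q) \<partial>CS) = (2*Q*p l) * (\<integral>\<^sup>+m. p m \<partial>CS)" .
  qed
  also have "\<dots> = (\<integral>\<^sup>+l. 2*Q*p l \<partial>CS) * (\<integral>\<^sup>+m. p m \<partial>CS)"
    by (rule nn_integral_multc) simp
  also have "\<dots> = 2 * ((\<integral>\<^sup>+l. p l \<partial>CS)\<^sup>2 * Q)"
    by (subst nn_integral_cmult) (simp_all add: power2_eq_square mult_ac)
  finally have "2 * (\<integral>\<^sup>+k. (\<integral>\<^sup>+l. p l * q (k - l) \<partial>CS)\<^sup>2 \<partial>CS) \<le> 2 * ((\<integral>\<^sup>+l. p l \<partial>CS)\<^sup>2 * Q)" .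
  thus ?thesis unfolding Q_def
    by (subst (asm) ennreal_mult_le_mult_iff) auto
qed



lemma sq_sum_le_ennreal:
  fixes a b :: ennreal
  shows "(a + b)\<^sup>2 \<le> 2 * a\<^sup>2 + 2 * b\<^sup>2"
proof -
  have "(a + b)\<^sup>2 = a\<^sup>2 + 2 * a * b + b\<^sup>2"
    by (simp add: power2_eq_square algebra_simps mult_2 mult_2_right)
  also have "\<dots> \<le> a\<^sup>2 + (a\<^sup>2 + b\<^sup>2) + b\<^sup>2"
    by (intro add_mono order_refl sum_of_squares_ge_ennreal)
  also have "\<dots> = 2 * a\<^sup>2 + 2 * b\<^sup>2" by (simp add: mult_2 algebra_simps)
  finally show ?thesis .
qed

lemma reflect_cs:
  fixes x z :: "'a::ab_group_add \<Rightarrow> ennreal"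
  shows "(\<integral>\<^sup>+l. x l * z (k - l) \<partial>CS) = (\<integral>\<^sup>+m. z m * x (k - m) \<partial>CS)"
proof -
  have "bij_betw (\<lambda>m. k - m) UNIV (UNIV::'a set)"
    by (rule bij_betwI[where g="\<lambda>m. k - m"]) auto
  from nn_integral_bij_count_space[OF this, of "\<lambda>l. x l * z (k - l)"]
  show ?thesis by (simp add: mult.commute)
qed

lemma CS_cs:
  fixes f g :: "'a \<Rightarrow> ennreal"
  shows "(\<integral>\<^sup>+l. f l * g l \<partial>CS)\<^sup>2 \<le> (\<integral>\<^sup>+l. (f l)\<^sup>2 \<partial>CS) * (\<integral>\<^sup>+l. (g l)\<^sup>2 \<partial>CS)"
  by (rule Cauchy_Schwarz_nn_integral) auto

lemma discrete:
  fixes A Rw w rho b :: "'a::ab_group_add \<Rightarrow> ennreal"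
  assumes H: "\<And>k l. A k \<le> P * Rw l * A (k - l) * (w l + w (k - l))"
  shows "(\<integral>\<^sup>+k. (A k * (\<integral>\<^sup>+l. rho l * b (k - l) \<partial>CS))\<^sup>2 \<partial>CS)
     \<le> 4 * P\<^sup>2 * (\<integral>\<^sup>+l. (w l)\<^sup>2 \<partial>CS) * (\<integral>\<^sup>+l. (rho l * Rw l)\<^sup>2 \<partial>CS) * (\<integral>\<^sup>+k. (A k * b k)\<^sup>2 \<partial>CS)"
proof -
  define x where "x l = rho l * Rw l" for l
  define y where "y k = A k * b k" for k
  define z where "z k = w k * y k" for k
  define T1 where "T1 k = (\<integral>\<^sup>+l. (x l * w l) * y (k - l) \<partial>CS)" for k
  define T2 where "T2 k = (\<integral>\<^sup>+m. z m * x (k - m) \<partial>CS)" for k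
  define X where "X = (\<integral>\<^sup>+l. (x l)\<^sup>2 \<partial>CS)"
  define Y where "Y = (\<integral>\<^sup>+l. (y l)\<^sup>2 \<partial>CS)"
  define W where "W = (\<integral>\<^sup>+l. (w l)\<^sup>2 \<partial>CS)"
  have pt: "A k * (\<integral>\<^sup>+l. rho l * b (k - l) \<partial>CS) \<le> P * (T1 k + T2 k)" for k
  proof -
    have "A k * (\<integral>\<^sup>+l. rho l * b (k - l) \<partial>CS) = (\<integral>\<^sup>+l. A k * (rho l * b (k - l)) \<partial>CS)"
      by (simp add: nn_integral_cmult)
    also have "\<dots> \<le> (\<integral>\<^sup>+l. (P * Rw l * A (k - l) * (w l + w (k - l))) * (rho l * b (k - l)) \<partial>CS)"
      by (intro nn_integral_mono mult_right_mono H) auto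
    also have "\<dots> = (\<integral>\<^sup>+l. P * ((x l * w l) * y (k - l)) + P * (x l * z (k - l)) \<partial>CS)"
      by (intro nn_integral_cong) (simp add: x_def y_def z_def algebra_simps)
    also have "\<dots> = P * T1 k + P * (\<integral>\<^sup>+l. x l * z (k - l) \<partial>CS)"
      by (simp add: nn_integral_add nn_integral_cmult T1_def)
    also have "\<dots> = P * (T1 k + T2 k)"
      by (simp add: T2_def reflect_cs[of x z k] distrib_left)
    finally show ?thesis .
  qed
  have s1: "(\<integral>\<^sup>+k. (T1 k)\<^sup>2 \<partial>CS) \<le> X * W * Y"
  proof -
    have "(\<integral>\<^sup>+k. (T1 k)\<^sup>2 \<partial>CS) \<le> (\<integral>\<^sup>+l. x l * w l \<partial>CS)\<^sup>2 * Y"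
      unfolding T1_def Y_def by (rule young)
    also have "\<dots> \<le> (X * W) * Y"
      unfolding X_def W_def by (intro mult_right_mono CS_cs) auto
    finally show ?thesis .
  qed
  have s2: "(\<integral>\<^sup>+k. (T2 k)\<^sup>2 \<partial>CS) \<le> X * W * Y"
  proof -
    have "(\<integral>\<^sup>+k. (T2 k)\<^sup>2 \<partial>CS) \<le> (\<integral>\<^sup>+l. z l \<partial>CS)\<^sup>2 * X"
      unfolding T2_def X_def by (rule young)
    also have "\<dots> \<le> (W * Y) * X"
      unfolding z_def W_def Y_def by (intro mult_right_mono CS_cs) auto
    finally show ?thesis by (simp add: mult_ac)
  qed
  have "(\<integral>\<^sup>+k. (A k * (\<integral>\<^sup>+l. rho l * b (k - l) \<partial>CS))\<^sup>2 \<partial>CS) \<le> (\<integral>\<^sup>+k. P\<^sup>2 * (2 * (T1 k)\<^sup>2 + 2 * (T2 k)\<^sup>2) \<partial>CS)"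
  proof (intro nn_integral_mono)
    fix k
    have "(A k * (\<integral>\<^sup>+l. rho l * b (k - l) \<partial>CS))\<^sup>2 \<le> (P * (T1 k + T2 k))\<^sup>2"
      by (intro power_mono_ennreal pt)
    also have "\<dots> = P\<^sup>2 * (T1 k + T2 k)\<^sup>2" by (simp add: power_mult_distrib)
    also have "\<dots> \<le> P\<^sup>2 * (2 * (T1 k)\<^sup>2 + 2 * (T2 k)\<^sup>2)"
      by (intro mult_left_mono sq_sum_le_ennreal) auto
    finally show "(A k * (\<integral>\<^sup>+l. rho l * b (k - l) \<partial>CS))\<^sup>2 \<le> P\<^sup>2 * (2 * (T1 k)\<^sup>2 + 2 * (T2 k)\<^sup>2)" .
  qed
  also have "\<dots> = P\<^sup>2 * (2 * (\<integral>\<^sup>+k. (T1 k)\<^sup>2 \<partial>CS) + 2 * (\<integral>\<^sup>+k. (T2 k)\<^sup>2 \<partial>CS))"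
    by (simp add: nn_integral_cmult nn_integral_add)
  also have "\<dots> \<le> P\<^sup>2 * (2 * (X * W * Y) + 2 * (X * W * Y))"
    by (intro mult_left_mono add_mono s1 s2) auto
  also have "\<dots> = 4 * P\<^sup>2 * W * X * Y"
    by (simp add: algebra_simps mult_2[symmetric])
  finally show ?thesis unfolding W_def X_def Y_def x_def y_def .
qed



definition ir :: "int^'n \<Rightarrow> real^'n" where "ir k = (\<chi> i. of_int (k$i))"

lemma norm_vec_sq: "(norm (x::real^'n))\<^sup>2 = (\<Sum>i\<in>UNIV. (x$i)\<^sup>2)"
  unfolding norm_vec_def L2_set_def by (simp add: sum_nonneg)

lemma jbr2_norm: "jbr2 k eta = norm ((1::real), ir k, eta)"
  unfolding jbr2_def norm_Pair by (simp add: norm_vec_sq ir_def add.assoc sum_nonneg)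

lemma jbr_norm: "jbr k = norm ((1::real), ir k)"
  unfolding jbr_def norm_Pair by (simp add: norm_vec_sq ir_def)

lemma jbr_ge1: "jbr k \<ge> 1"
  unfolding jbr_def by (simp add: sum_nonneg)

lemma jbr2_ge1: "jbr2 k eta \<ge> 1"
  unfolding jbr2_def by (simp add: sum_nonneg add_nonneg_nonneg)

lemma jbr_le_jbr2: "jbr k \<le> jbr2 k eta"
  unfolding jbr_def jbr2_def by (simp add: sum_nonneg)

lemma jbr2_triangle: fixes k l :: "int^'n" and eta :: "real^'n" shows "jbr2 k eta \<le> jbr2 (k - l) eta + jbr l"
proof -
  have ir: "ir k = ir (k - l) + ir l" by (simp add: ir_def vec_eq_iff)
  have "((1::real), ir k, eta) = ((1::real), ir (k - l), eta) + (0, ir l, 0)"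
    by (simp add: ir)
  hence "jbr2 k eta \<le> jbr2 (k - l) eta + norm ((0::real), ir l, (0::real^'n))"
    unfolding jbr2_norm using norm_triangle_ineq[of "((1::real), ir (k - l), eta)" "((0::real), ir l, (0::real^'n))"]
    by simp
  also have "norm ((0::real), ir l, (0::real^'n)) \<le> jbr l"
    unfolding jbr_norm norm_Pair by (simp add: real_le_rsqrt)
  finally show ?thesis by simp
qed

lemma powr_subadd:
  fixes x y s :: real
  assumes "0 \<le> x" "0 \<le> y" "0 < s" "s \<le> 1"
  shows "(x + y) powr s \<le> x powr s + y powr s"
proof (cases "x + y = 0")
  case True then show ?thesis using assms by simp
next
  case False
  hence p: "x + y > 0" using assms by simp
  have a: "t / (x+y) \<le> (t / (x+y)) powr s"
    if "0 \<le> t" "t \<le> x + y" for t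
  proof -
    have "(t/(x+y)) powr 1 \<le> (t/(x+y)) powr s"
      by (rule powr_mono') (use assms that p in \<open>auto simp: divide_le_eq\<close>)
    thus ?thesis using that p by simp
  qed
  have "(x+y) powr s = (x+y) powr s * (x/(x+y) + y/(x+y))"
    using p by (simp add: add_divide_distrib[symmetric])
  also have "\<dots> \<le> (x+y) powr s * ((x/(x+y)) powr s + (y/(x+y)) powr s)"
    by (intro mult_left_mono add_mono a) (use assms in auto)
  also have "\<dots> = x powr s + y powr s"
    using p assms by (simp add: powr_divide distrib_left)
  finally show ?thesis .
qed

lemma powr_sum_le:
  fixes a b sig :: real
  assumes "0 \<le> a" "0 \<le> b" "0 \<le> sig"
  shows "(a + b) powr sig \<le> 2 powr sig * (a powr sig + b powr sig)"
proof -
  have "(a + b) powr sig \<le> (2 * max a b) powr sig"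
    by (rule powr_mono2) (use assms in auto)
  also have "\<dots> = 2 powr sig * (max a b) powr sig"
    using assms by (simp add: powr_mult)
  also have "(max a b) powr sig \<le> a powr sig + b powr sig"
    by (cases "a \<le> b") (auto simp: max_def)
  finally show ?thesis by (simp add: mult_left_mono)
qed

lemma weight_ineq:
  fixes lam sig s :: real
  assumes lam: "0 \<le> lam" and sig: "0 \<le> sig" and s: "0 < s" "s \<le> 1"
  shows "Aw lam sig s k eta \<le> 2 powr sig * (jbr l powr sig * exp (lam * jbr l powr s)) * Aw lam sig s (k - l) eta
            * (jbr l powr (-sig) + jbr (k - l) powr (-sig))"
proof -
  define J where "J = jbr2 k eta"
  define J' where "J' = jbr2 (k - l) eta"
  define L where "L = jbr l"
  define J'' where "J'' = jbr (k - l)"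
  have J: "J \<le> J' + L" unfolding J_def J'_def L_def by (rule jbr2_triangle)
  have pos: "J \<ge> 1" "J' \<ge> 1" "L \<ge> 1" "J'' \<ge> 1" "J'' \<le> J'"
    unfolding J_def J'_def L_def J''_def by (auto simp: jbr2_ge1 jbr_ge1 jbr_le_jbr2)
  have e1: "J powr sig \<le> 2 powr sig * (J' powr sig + L powr sig)"
  proof -
    have "J powr sig \<le> (J' + L) powr sig" by (rule powr_mono2) (use sig J pos in auto)
    also have "\<dots> \<le> 2 powr sig * (J' powr sig + L powr sig)"
      by (rule powr_sum_le) (use pos sig in auto)
    finally show ?thesis .
  qed
  have e2: "exp (lam * J powr s) \<le> exp (lam * J' powr s) * exp (lam * L powr s)"
  proof -
    have "J powr s \<le> (J' + L) powr s" by (rule powr_mono2) (use s J pos in auto)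
    also have "\<dots> \<le> J' powr s + L powr s" by (rule powr_subadd) (use pos s in auto)
    finally have "lam * J powr s \<le> lam * J' powr s + lam * L powr s"
      using lam by (simp add: distrib_left[symmetric] mult_left_mono)
    thus ?thesis by (simp add: exp_add[symmetric])
  qed
  have e3: "J' powr sig + L powr sig \<le> L powr sig * J' powr sig * (L powr (-sig) + J'' powr (-sig))"
  proof -
    have "J' powr (-sig) \<le> J'' powr (-sig)"
      using pos sig by (simp add: powr_minus le_imp_inverse_le powr_mono2)
    hence "L powr sig * J' powr sig * (L powr (-sig) + J' powr (-sig)) \<le> L powr sig * J' powr sig * (L powr (-sig) + J'' powr (-sig))"
      using pos by (intro mult_left_mono add_left_mono) auto
    moreover have "L powr sig * J' powr sig * (L powr (-sig) + J' powr (-sig)) = J' powr sig + L powr sig"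
      using pos by (simp add: powr_minus distrib_left field_simps)
    ultimately show ?thesis by simp
  qed
  have "Aw lam sig s k eta = J powr sig * exp (lam * J powr s)" by (simp add: Aw_def J_def)
  also have "\<dots> \<le> (2 powr sig * (J' powr sig + L powr sig)) * (exp (lam * J' powr s) * exp (lam * L powr s))"
    by (intro mult_mono e1 e2) auto
  also have "\<dots> \<le> (2 powr sig * (L powr sig * J' powr sig * (L powr (-sig) + J'' powr (-sig)))) * (exp (lam * J' powr s) * exp (lam * L powr s))"
    by (intro mult_right_mono mult_left_mono e3) auto
  also have "\<dots> = 2 powr sig * (L powr sig * exp (lam * L powr s)) * Aw lam sig s (k - l) eta
            * (L powr (-sig) + J'' powr (-sig))"
    by (simp add: Aw_def J'_def mult_ac)
  finally show ?thesis by (simp add: L_def J''_def)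
qed



lemma h_summable:
  fixes q :: real assumes q: "q > 1/2"
  shows "summable (\<lambda>m::nat. (1 + (real m)\<^sup>2) powr (-q))"
proof (rule summable_comparison_test')
  show "summable (\<lambda>m::nat. real m powr (-2*q))"
    using q by (subst summable_real_powr_iff) auto
  show "norm ((1 + (real m)\<^sup>2) powr (-q)) \<le> real m powr (-2*q)" if "m \<ge> 1" for m
  proof -
    have "(1 + (real m)\<^sup>2) powr (-q) \<le> ((real m)\<^sup>2) powr (-q)"
      using that q by (intro powr_mono2') auto
    also have "\<dots> = real m powr (-2*q)"
    proof -
      have e: "(real m)\<^sup>2 = real m powr 2" using that by (simp add: powr_realpow)
      have "((real m)\<^sup>2) powr (-q) = (real m powr 2) powr (-q)" by (simp only: e)
      also have "\<dots> = real m powr (2 * (-q))" by (rule powr_powr)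
      finally show ?thesis by simp
    qed
    finally show ?thesis by simp
  qed
qed

lemma hz_sum:
  fixes q :: real and N :: nat assumes q: "q > 1/2"
  shows "(\<Sum>n\<in>{-int N..int N}. (1 + (real_of_int n)\<^sup>2) powr (-q))
         \<le> 2 * suminf (\<lambda>m::nat. (1 + (real m)\<^sup>2) powr (-q))"
proof -
  define h where "h n = (1 + (real_of_int n)\<^sup>2) powr (-q)" for n :: int
  define h' where "h' m = (1 + (real m)\<^sup>2) powr (-q)" for m :: nat
  have hn: "h n \<ge> 0" for n by (simp add: h_def)
  have sub: "{-int N..int N} \<subseteq> int ` {0..N} \<union> uminus ` int ` {0..N}"
  proof
    fix n assume "n \<in> {-int N..int N}"
    show "n \<in> int ` {0..N} \<union> uminus ` int ` {0..N}"
    proof (cases "n \<ge> 0")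
      case True then have "n = int (nat n)" by simp
      thus ?thesis using \<open>n \<in> _\<close> by (metis (no_types, lifting) UnI1 atLeastAtMost_iff image_eqI nat_le_iff zero_le)
    next
      case False then have "n = - int (nat (-n))" by simp
      thus ?thesis using \<open>n \<in> _\<close> False
        by (intro UnI2 image_eqI[where x="-n"]) (auto intro!: image_eqI[where x="nat (-n)"])
    qed
  qed
  have "(\<Sum>n\<in>{-int N..int N}. h n) \<le> (\<Sum>n\<in>int ` {0..N} \<union> uminus ` int ` {0..N}. h n)"
    by (rule sum_mono2) (use sub hn in auto)
  also have "\<dots> \<le> (\<Sum>n\<in>int ` {0..N}. h n) + (\<Sum>n\<in>uminus ` int ` {0..N}. h n)"
  proof -
    have "sum h (int ` {0..N} \<inter> uminus ` int ` {0..N}) \<ge> 0" by (rule sum_nonneg) (use hn in auto)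
    moreover have "sum h (int ` {0..N} \<union> uminus ` int ` {0..N}) = sum h (int ` {0..N}) + sum h (uminus ` int ` {0..N}) - sum h (int ` {0..N} \<inter> uminus ` int ` {0..N})"
      by (rule sum_Un) auto
    ultimately show ?thesis by linarith
  qed
  also have "(\<Sum>n\<in>int ` {0..N}. h n) = (\<Sum>m\<in>{0..N}. h' m)"
    apply (subst sum.reindex)
     apply (simp add: inj_on_def)
    apply (simp add: o_def h_def h'_def)
    done
  also have "(\<Sum>n\<in>uminus ` int ` {0..N}. h n) = (\<Sum>m\<in>{0..N}. h' m)"
    apply (subst sum.reindex)
     apply (simp add: inj_on_def)
    apply (subst sum.reindex)
     apply (simp add: inj_on_def)
    apply (simp add: o_def h_def h'_def)
    done
  also have "(\<Sum>m\<in>{0..N}. h' m) \<le> suminf h'"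
    using h_summable[OF q] by (intro sum_le_suminf) (auto simp: h'_def)
  finally show ?thesis by (simp add: h_def[abs_def] h'_def[abs_def])
qed



lemma jbr_pow_bound:
  fixes l :: "int^'n" and sig :: real
  assumes sig: "sig \<ge> 0"
  shows "(jbr l powr (-sig))\<^sup>2 \<le> (\<Prod>i\<in>UNIV. (1 + (real_of_int (l$i))\<^sup>2) powr (-(sig / real CARD('n))))"
proof -
  define S where "S = 1 + (\<Sum>i\<in>UNIV. (real_of_int (l$i))\<^sup>2)"
  define q where "q = sig / real CARD('n)"
  have S1: "S \<ge> 1" unfolding S_def by (simp add: sum_nonneg)
  have "jbr l = S powr (1/2)" unfolding jbr_def S_def by (simp add: powr_half_sqrt sum_nonneg add_nonneg_nonneg)
  hence "(jbr l powr (-sig))\<^sup>2 = S powr (-sig)"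
    using S1 by (simp add: powr_powr power2_eq_square powr_add[symmetric])
  also have "\<dots> = (S powr (-q)) ^ CARD('n)"
    using S1 by (simp add: powr_power q_def)
  also have "\<dots> = (\<Prod>i\<in>(UNIV::'n set). S powr (-q))" by simp
  also have "\<dots> \<le> (\<Prod>i\<in>UNIV. (1 + (real_of_int (l$i))\<^sup>2) powr (-q))"
  proof (rule prod_mono, rule conjI)
    fix i :: 'n
    show "0 \<le> S powr (-q)" by simp
    have "(real_of_int (l$i))\<^sup>2 \<le> (\<Sum>i\<in>UNIV. (real_of_int (l$i))\<^sup>2)"
      by (rule member_le_sum) auto
    hence "1 + (real_of_int (l$i))\<^sup>2 \<le> S" unfolding S_def by simp
    thus "S powr (-q) \<le> (1 + (real_of_int (l$i))\<^sup>2) powr (-q)"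
      by (intro powr_mono2') (use sig in \<open>auto simp: q_def add_pos_nonneg\<close>)
  qed
  finally show ?thesis by (simp add: q_def)
qed

lemma lattice_summable:
  fixes sig :: real
  assumes sig: "sig > real CARD('n) / 2"
  shows "(\<lambda>l::int^'n. (jbr l powr (-sig))\<^sup>2) summable_on UNIV"
proof (rule nonneg_bdd_above_summable_on)
  show "\<And>x. x \<in> UNIV \<Longrightarrow> 0 \<le> (jbr x powr - sig)\<^sup>2" by simp
  define q where "q = sig / real CARD('n)"
  have q: "q > 1/2" using sig by (simp add: q_def field_simps)
  have sig0: "sig \<ge> 0" using sig by (smt (verit) of_nat_0_le_iff divide_nonneg_nonneg)
  define hz where "hz n = (1 + (real_of_int n)\<^sup>2) powr (-q)" for n :: int
  define H where "H = suminf (\<lambda>m::nat. (1 + (real m)\<^sup>2) powr (-q))"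
  have hzsum: "(\<Sum>n\<in>{-int N..int N}. hz n) \<le> 2 * H" for N
    unfolding hz_def H_def by (rule hz_sum[OF q])
  have hz0: "hz n \<ge> 0" for n by (simp add: hz_def)
  have bnd: "sum (\<lambda>l. (jbr l powr (-sig))\<^sup>2) F \<le> (2 * H) ^ CARD('n)" if F: "finite F" for F :: "(int^'n) set"
  proof -
    define N where "N = Max ({0} \<union> (\<lambda>(l,i). nat \<bar>l$i\<bar>) ` (F \<times> UNIV))"
    define P where "P = (PiE (UNIV::'n set) (\<lambda>_. {-int N..int N}))"
    define B where "B = vec_lambda ` P"
    have finP: "finite P" unfolding P_def by (rule finite_PiE) auto
    have FB: "F \<subseteq> B"
    proof
      fix l assume l: "l \<in> F"
      have "nat \<bar>l$i\<bar> \<le> N" for i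
        unfolding N_def by (rule Max_ge) (use F l in auto)
      hence "-int N \<le> l$i \<and> l$i \<le> int N" for i
        by (metis abs_le_iff int_nat_eq minus_le_iff nat_le_iff abs_ge_zero)
      hence "vec_nth l \<in> P" unfolding P_def by (auto simp: PiE_def extensional_def)
      thus "l \<in> B" unfolding B_def by (metis image_eqI vec_nth_inverse)
    qed
    have "sum (\<lambda>l. (jbr l powr (-sig))\<^sup>2) F \<le> sum (\<lambda>l. \<Prod>i\<in>UNIV. hz (l$i)) F"
      by (intro sum_mono) (use jbr_pow_bound[OF sig0] in \<open>simp add: hz_def q_def\<close>)
    also have "\<dots> \<le> sum (\<lambda>l. \<Prod>i\<in>UNIV. hz (l$i)) B"
      by (rule sum_mono2) (use FB finP hz0 in \<open>auto simp: B_def prod_nonneg\<close>)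
    also have "\<dots> = sum (\<lambda>g. \<Prod>i\<in>UNIV. hz (g i)) P"
      unfolding B_def by (subst sum.reindex) (auto simp: inj_on_def vec_lambda_inject)
    also have "\<dots> = (\<Prod>i\<in>(UNIV::'n set). \<Sum>n\<in>{-int N..int N}. hz n)"
      unfolding P_def by (rule prod_sum_PiE[symmetric]) auto
    also have "\<dots> \<le> (\<Prod>i\<in>(UNIV::'n set). 2 * H)"
      by (intro prod_mono) (auto intro: sum_nonneg hz0 hzsum)
    also have "\<dots> = (2 * H) ^ CARD('n)" by simp
    finally show ?thesis .
  qed
  show "bdd_above (sum (\<lambda>l::int^'n. (jbr l powr (-sig))\<^sup>2) ` {F. F \<subseteq> UNIV \<and> finite F})"
    by (rule bdd_aboveI[where M="(2 * H) ^ CARD('n)"]) (use bnd in auto)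
qed



lemma jbr2_arg_pos: "1 + (\<Sum>i\<in>UNIV. (real_of_int (k $ i))\<^sup>2) + (\<Sum>i\<in>UNIV. ((x::real^'n) $ i)\<^sup>2) \<noteq> 0"
proof -
  have "0 \<le> (\<Sum>i\<in>UNIV. (real_of_int (k $ i))\<^sup>2)" "0 \<le> (\<Sum>i\<in>UNIV. (x $ i)\<^sup>2)"
    by (simp_all add: sum_nonneg)
  thus ?thesis by linarith
qed

lemma Aw_meas: "(\<lambda>eta. Aw lam sig s k eta) \<in> borel_measurable lborel"
proof -
  have "continuous_on UNIV (\<lambda>eta. Aw lam sig s k eta)"
    unfolding Aw_def jbr2_def
    by (intro continuous_intros) (use jbr2_arg_pos in \<open>auto simp del: jbr2_arg_pos\<close>)
  thus ?thesis using borel_measurable_continuous_onI by simp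
qed

lemma Aw_pos: "Aw lam sig s k eta > 0"
  unfolding Aw_def using jbr2_ge1[of k eta] by simp

lemma cmod_meas:
  assumes "integrable lborel (\<lambda>eta. (cmod (g eta))\<^sup>2 * (Aw lam sig s k eta)\<^sup>2)"
  shows "(\<lambda>eta. cmod (g eta)) \<in> borel_measurable lborel"
proof -
  have m: "(\<lambda>eta. (cmod (g eta))\<^sup>2 * (Aw lam sig s k eta)\<^sup>2) \<in> borel_measurable lborel"
    using assms by measurable
  have "(\<lambda>eta. sqrt ((cmod (g eta))\<^sup>2 * (Aw lam sig s k eta)\<^sup>2) / Aw lam sig s k eta) \<in> borel_measurable lborel"
    using m Aw_meas by measurable
  moreover have "sqrt ((cmod (g eta))\<^sup>2 * (Aw lam sig s k eta)\<^sup>2) / Aw lam sig s k eta = cmod (g eta)" for eta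
    using Aw_pos[of lam sig s k eta] by (simp add: real_sqrt_mult)
  ultimately show ?thesis by simp
qed

lemma iter_pair:
  fixes F :: "'a::countable \<Rightarrow> 'b \<Rightarrow> ennreal"
  assumes M: "sigma_finite_measure M" and F: "\<And>k. F k \<in> borel_measurable M"
  shows "(\<integral>\<^sup>+k. \<integral>\<^sup>+x. F k x \<partial>M \<partial>CS) = (\<integral>\<^sup>+z. F (fst z) (snd z) \<partial>(CS \<Otimes>\<^sub>M M))"
    and "(\<lambda>z. F (fst z) (snd z)) \<in> borel_measurable (CS \<Otimes>\<^sub>M M)"
proof -
  interpret sigma_finite_measure M by (rule M)
  show meas: "(\<lambda>z. F (fst z) (snd z)) \<in> borel_measurable (CS \<Otimes>\<^sub>M M)"
    by (rule measurable_pair_measure_countable1) (use F in \<open>auto simp: measurable_ident_sets\<close>)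
  show "(\<integral>\<^sup>+k. \<integral>\<^sup>+x. F k x \<partial>M \<partial>CS) = (\<integral>\<^sup>+z. F (fst z) (snd z) \<partial>(CS \<Otimes>\<^sub>M M))"
    using nn_integral_fst[OF meas] by simp
qed

lemma CS_iter:
  fixes F H :: "'a::countable \<Rightarrow> 'b \<Rightarrow> ennreal"
  assumes M: "sigma_finite_measure M" and F: "\<And>k. F k \<in> borel_measurable M" and H: "\<And>k. H k \<in> borel_measurable M"
  shows "(\<integral>\<^sup>+k. \<integral>\<^sup>+x. F k x * H k x \<partial>M \<partial>CS)\<^sup>2 \<le> (\<integral>\<^sup>+k. \<integral>\<^sup>+x. (F k x)\<^sup>2 \<partial>M \<partial>CS) * (\<integral>\<^sup>+k. \<integral>\<^sup>+x. (H k x)\<^sup>2 \<partial>M \<partial>CS)"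
proof -
  have mF: "(\<lambda>z. F (fst z) (snd z)) \<in> borel_measurable (CS \<Otimes>\<^sub>M M)" by (rule iter_pair(2)[OF M F])
  have mH: "(\<lambda>z. H (fst z) (snd z)) \<in> borel_measurable (CS \<Otimes>\<^sub>M M)" by (rule iter_pair(2)[OF M H])
  have e1: "(\<integral>\<^sup>+k. \<integral>\<^sup>+x. F k x * H k x \<partial>M \<partial>CS) = (\<integral>\<^sup>+z. F (fst z) (snd z) * H (fst z) (snd z) \<partial>(CS \<Otimes>\<^sub>M M))"
    by (rule iter_pair(1)[OF M, of "\<lambda>k x. F k x * H k x"]) (use F H in auto)
  have e2: "(\<integral>\<^sup>+k. \<integral>\<^sup>+x. (F k x)\<^sup>2 \<partial>M \<partial>CS) = (\<integral>\<^sup>+z. (F (fst z) (snd z))\<^sup>2 \<partial>(CS \<Otimes>\<^sub>M M))"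
    by (rule iter_pair(1)[OF M, of "\<lambda>k x. (F k x)\<^sup>2"]) (use F in auto)
  have e3: "(\<integral>\<^sup>+k. \<integral>\<^sup>+x. (H k x)\<^sup>2 \<partial>M \<partial>CS) = (\<integral>\<^sup>+z. (H (fst z) (snd z))\<^sup>2 \<partial>(CS \<Otimes>\<^sub>M M))"
    by (rule iter_pair(1)[OF M, of "\<lambda>k x. (H k x)\<^sup>2"]) (use H in auto)
  show ?thesis unfolding e1 e2 e3 by (rule Cauchy_Schwarz_nn_integral[OF mF mH])
qed

lemma swap_iter:
  fixes F :: "'a::countable \<Rightarrow> 'b \<Rightarrow> ennreal"
  assumes M: "sigma_finite_measure M" and F: "\<And>k. F k \<in> borel_measurable M"
  shows "(\<integral>\<^sup>+k. \<integral>\<^sup>+x. F k x \<partial>M \<partial>CS) = (\<integral>\<^sup>+x. \<integral>\<^sup>+k. F k x \<partial>CS \<partial>M)"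
proof -
  interpret pair_sigma_finite "CS::'a measure" M
    unfolding pair_sigma_finite_def using M sigma_finite_measure_count_space by auto
  have "case_prod F \<in> borel_measurable (CS \<Otimes>\<^sub>M M)"
    using iter_pair(2)[OF M F] by (simp add: case_prod_beta')
  from Fubini'[OF this] show ?thesis by simp
qed

lemma gnorm_nn:
  assumes "\<And>k. integrable lborel (\<lambda>eta. (cmod (g k eta))\<^sup>2 * (Aw lam sig s k eta)\<^sup>2)"
    and "(\<lambda>k. LINT eta | lborel. (cmod (g k eta))\<^sup>2 * (Aw lam sig s k eta)\<^sup>2) summable_on UNIV"
  shows "ennreal (gnorm_sq lam sig s g) = (\<integral>\<^sup>+k. \<integral>\<^sup>+eta. ennreal ((cmod (g k eta))\<^sup>2 * (Aw lam sig s k eta)\<^sup>2) \<partial>lborel \<partial>CS)"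
proof -
  have "ennreal (gnorm_sq lam sig s g) = (\<integral>\<^sup>+k. ennreal (LINT eta | lborel. (cmod (g k eta))\<^sup>2 * (Aw lam sig s k eta)\<^sup>2) \<partial>CS)"
    unfolding gnorm_sq_def by (rule ennreal_infsum_nn[OF assms(2)]) auto
  also have "\<dots> = (\<integral>\<^sup>+k. \<integral>\<^sup>+eta. ennreal ((cmod (g k eta))\<^sup>2 * (Aw lam sig s k eta)\<^sup>2) \<partial>lborel \<partial>CS)"
    by (intro nn_integral_cong nn_integral_eq_integral[symmetric] assms(1)) auto
  finally show ?thesis .
qed

lemma gnorm_nonneg: "gnorm_sq lam sig s g \<ge> 0"
  unfolding gnorm_sq_def by (intro infsum_nonneg) auto

lemma rho_nonneg: "rho_norm_sq lam sig s r \<ge> 0"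
  unfolding rho_norm_sq_def by (intro infsum_nonneg) auto

lemma sqrt_bound_ennreal:
  fixes x :: ennreal and y :: real
  assumes "x\<^sup>2 \<le> ennreal y" "0 \<le> y"
  shows "x \<le> ennreal (sqrt y)"
proof (cases x)
  case (real t)
  then have "ennreal (t\<^sup>2) \<le> ennreal y" using assms by (simp add: ennreal_power)
  hence "t\<^sup>2 \<le> y" using assms by (simp add: ennreal_le_iff)
  hence "t \<le> sqrt y" by (rule real_le_rsqrt)
  thus ?thesis using real by (simp add: ennreal_leI)
next
  case top
  then show ?thesis using assms by (simp add: top_unique)
qed



lemma core_Q:
  fixes r :: "int^'n \<Rightarrow> complex" and v :: "int^'n \<Rightarrow> real^'n \<Rightarrow> real" and c lam sig s :: real
  assumes lam: "0 \<le> lam" and sig: "0 \<le> sig" and s: "0 < s" "s \<le> 1" and c: "0 \<le> c"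
    and vm: "\<And>k. (\<lambda>eta. v k eta) \<in> borel_measurable lborel" and v0: "\<And>k eta. v k eta \<ge> 0"
  shows "(\<integral>\<^sup>+k. \<integral>\<^sup>+eta. (ennreal (Aw lam sig s k eta) * (\<integral>\<^sup>+l. ennreal (c * cmod (r l)) * ennreal (v (k - l) eta) \<partial>CS))\<^sup>2 \<partial>lborel \<partial>CS)
    \<le> 4 * (ennreal (2 powr sig))\<^sup>2 * (\<integral>\<^sup>+(l::int^'n). ennreal ((jbr l powr (-sig))\<^sup>2) \<partial>CS)
       * (ennreal (c\<^sup>2) * (\<integral>\<^sup>+l. ennreal ((cmod (r l))\<^sup>2 * (jbr l powr sig * exp (lam * jbr l powr s))\<^sup>2) \<partial>CS))
       * (\<integral>\<^sup>+k. \<integral>\<^sup>+eta. ennreal ((v k eta)\<^sup>2 * (Aw lam sig s k eta)\<^sup>2) \<partial>lborel \<partial>CS)"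
proof -
  define N where "N k eta = (\<integral>\<^sup>+l. ennreal (c * cmod (r l)) * ennreal (v (k - l) eta) \<partial>CS)" for k eta
  define Kst where "Kst = 4 * (ennreal (2 powr sig))\<^sup>2 * (\<integral>\<^sup>+(l::int^'n). ennreal ((jbr l powr (-sig))\<^sup>2) \<partial>CS)
       * (ennreal (c\<^sup>2) * (\<integral>\<^sup>+l. ennreal ((cmod (r l))\<^sup>2 * (jbr l powr sig * exp (lam * jbr l powr s))\<^sup>2) \<partial>CS))"
  have sf: "sigma_finite_measure lborel" by (rule lborel.sigma_finite_measure_axioms)
  have Nm: "(\<lambda>eta. N k eta) \<in> borel_measurable lborel" for k
    unfolding N_def by (rule meas_count2) (use vm in measurable)
  have Gm: "(\<lambda>eta. ennreal ((v k eta)\<^sup>2 * (Aw lam sig s k eta)\<^sup>2)) \<in> borel_measurable lborel" for k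
    using vm Aw_meas by measurable
  have pt: "(\<integral>\<^sup>+k. (ennreal (Aw lam sig s k eta) * N k eta)\<^sup>2 \<partial>CS)
      \<le> Kst * (\<integral>\<^sup>+k. ennreal ((v k eta)\<^sup>2 * (Aw lam sig s k eta)\<^sup>2) \<partial>CS)" for eta
  proof -
    have H: "ennreal (Aw lam sig s k eta) \<le> ennreal (2 powr sig) * ennreal (jbr l powr sig * exp (lam * jbr l powr s))
       * ennreal (Aw lam sig s (k - l) eta) * (ennreal (jbr l powr (-sig)) + ennreal (jbr (k - l) powr (-sig)))" for k l
    proof -
      have "ennreal (Aw lam sig s k eta) \<le> ennreal (2 powr sig * (jbr l powr sig * exp (lam * jbr l powr s)) * Aw lam sig s (k - l) eta
            * (jbr l powr (-sig) + jbr (k - l) powr (-sig)))"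
        by (rule ennreal_leI, rule weight_ineq) (use lam sig s in auto)
      also have "\<dots> = ennreal (2 powr sig) * ennreal (jbr l powr sig * exp (lam * jbr l powr s))
       * ennreal (Aw lam sig s (k - l) eta) * (ennreal (jbr l powr (-sig)) + ennreal (jbr (k - l) powr (-sig)))"
        using Aw_pos[of lam sig s "k - l" eta]
        by (simp add: ennreal_mult ennreal_plus[symmetric] del: ennreal_plus)
      finally show ?thesis .
    qed
    note D = discrete[where A="\<lambda>k. ennreal (Aw lam sig s k eta)" and P="ennreal (2 powr sig)"
        and Rw="\<lambda>l. ennreal (jbr l powr sig * exp (lam * jbr l powr s))" and w="\<lambda>l. ennreal (jbr l powr (-sig))"
        and rho="\<lambda>l. ennreal (c * cmod (r l))" and b="\<lambda>k. ennreal (v k eta)", OF H]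
    have e1: "(\<integral>\<^sup>+(l::int^'n). (ennreal (jbr l powr (-sig)))\<^sup>2 \<partial>CS) = (\<integral>\<^sup>+(l::int^'n). ennreal ((jbr l powr (-sig))\<^sup>2) \<partial>CS)"
      by (simp add: ennreal_power)
    have e2: "(\<integral>\<^sup>+l. (ennreal (c * cmod (r l)) * ennreal (jbr l powr sig * exp (lam * jbr l powr s)))\<^sup>2 \<partial>CS)
       = ennreal (c\<^sup>2) * (\<integral>\<^sup>+l. ennreal ((cmod (r l))\<^sup>2 * (jbr l powr sig * exp (lam * jbr l powr s))\<^sup>2) \<partial>CS)"
    proof -
      have "(\<integral>\<^sup>+l. (ennreal (c * cmod (r l)) * ennreal (jbr l powr sig * exp (lam * jbr l powr s)))\<^sup>2 \<partial>CS)
         = (\<integral>\<^sup>+l. ennreal (c\<^sup>2) * ennreal ((cmod (r l))\<^sup>2 * (jbr l powr sig * exp (lam * jbr l powr s))\<^sup>2) \<partial>CS)"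
        using c by (intro nn_integral_cong) (simp add: ennreal_mult[symmetric] ennreal_power power_mult_distrib mult_ac)
      also have "\<dots> = ennreal (c\<^sup>2) * (\<integral>\<^sup>+l. ennreal ((cmod (r l))\<^sup>2 * (jbr l powr sig * exp (lam * jbr l powr s))\<^sup>2) \<partial>CS)"
        by (rule nn_integral_cmult) simp
      finally show ?thesis .
    qed
    have e3: "(\<integral>\<^sup>+k. (ennreal (Aw lam sig s k eta) * ennreal (v k eta))\<^sup>2 \<partial>CS) = (\<integral>\<^sup>+k. ennreal ((v k eta)\<^sup>2 * (Aw lam sig s k eta)\<^sup>2) \<partial>CS)"
    proof (intro nn_integral_cong)
      fix k
      have a: "0 \<le> Aw lam sig s k eta" using Aw_pos[of lam sig s k eta] by simp
      have "ennreal (Aw lam sig s k eta) * ennreal (v k eta) = ennreal (Aw lam sig s k eta * v k eta)"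
        using a v0[of k eta] by (simp add: ennreal_mult)
      hence "(ennreal (Aw lam sig s k eta) * ennreal (v k eta))\<^sup>2 = ennreal ((Aw lam sig s k eta * v k eta)\<^sup>2)"
        using a v0[of k eta] by (simp add: ennreal_power)
      thus "(ennreal (Aw lam sig s k eta) * ennreal (v k eta))\<^sup>2 = ennreal ((v k eta)\<^sup>2 * (Aw lam sig s k eta)\<^sup>2)"
        by (simp add: power_mult_distrib mult.commute)
    qed
    show ?thesis using D unfolding e1 e2 e3 N_def Kst_def by (simp add: mult_ac)
  qed
  have "(\<integral>\<^sup>+k. \<integral>\<^sup>+eta. (ennreal (Aw lam sig s k eta) * N k eta)\<^sup>2 \<partial>lborel \<partial>CS)
      = (\<integral>\<^sup>+eta. \<integral>\<^sup>+k. (ennreal (Aw lam sig s k eta) * N k eta)\<^sup>2 \<partial>CS \<partial>lborel)"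
    by (rule swap_iter[OF sf]) (use Nm Aw_meas in measurable)
  also have "\<dots> \<le> (\<integral>\<^sup>+eta. Kst * (\<integral>\<^sup>+k. ennreal ((v k eta)\<^sup>2 * (Aw lam sig s k eta)\<^sup>2) \<partial>CS) \<partial>lborel)"
    by (intro nn_integral_mono pt)
  also have "\<dots> = Kst * (\<integral>\<^sup>+eta. \<integral>\<^sup>+k. ennreal ((v k eta)\<^sup>2 * (Aw lam sig s k eta)\<^sup>2) \<partial>CS \<partial>lborel)"
    by (rule nn_integral_cmult) (rule meas_count2, rule Gm)
  also have "(\<integral>\<^sup>+eta. \<integral>\<^sup>+k. ennreal ((v k eta)\<^sup>2 * (Aw lam sig s k eta)\<^sup>2) \<partial>CS \<partial>lborel)
     = (\<integral>\<^sup>+k. \<integral>\<^sup>+eta. ennreal ((v k eta)\<^sup>2 * (Aw lam sig s k eta)\<^sup>2) \<partial>lborel \<partial>CS)"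
    by (rule swap_iter[OF sf, symmetric]) (rule Gm)
  finally show ?thesis unfolding N_def Kst_def .
qed



lemma normsqZ_pos: "l \<noteq> 0 \<Longrightarrow> normsqZ l > 0"
proof -
  assume "l \<noteq> 0"
  then obtain j where j: "l$j \<noteq> 0" by (metis vec_eq_iff zero_index)
  have "0 < (real_of_int (l$j))\<^sup>2" using j by simp
  also have "\<dots> \<le> normsqZ l" unfolding normsqZ_def by (rule member_le_sum) auto
  finally show ?thesis .
qed

lemma li_le_normsqZ: "\<bar>real_of_int (l$i)\<bar> \<le> normsqZ l"
proof -
  have z: "\<bar>z\<bar> \<le> z\<^sup>2" for z :: int
  proof (cases "z = 0")
    case False then have "1 \<le> \<bar>z\<bar>" by simp
    hence "\<bar>z\<bar> * 1 \<le> \<bar>z\<bar> * \<bar>z\<bar>" by (intro mult_left_mono) auto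
    thus ?thesis by (simp add: power2_eq_square)
  qed simp
  have "\<bar>real_of_int (l$i)\<bar> \<le> (real_of_int (l$i))\<^sup>2"
    using z[of "l$i"] by (metis of_int_abs of_int_le_iff of_int_power)
  also have "\<dots> \<le> normsqZ l" unfolding normsqZ_def by (rule member_le_sum) auto
  finally show ?thesis .
qed

lemma W_bound:
  assumes W: "\<forall>l. l \<noteq> 0 \<longrightarrow> cmod (What l) \<le> CW / normsqZ l" and l: "l \<noteq> 0"
  shows "cmod (What l) * \<bar>real_of_int (l$i)\<bar> \<le> CW"
proof -
  have p: "normsqZ l > 0" by (rule normsqZ_pos[OF l])
  have "cmod (What l) * \<bar>real_of_int (l$i)\<bar> \<le> (CW / normsqZ l) * normsqZ l"
    by (intro mult_mono li_le_normsqZ) (use W l in \<open>auto intro: order_trans[OF norm_ge_zero]\<close>)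
  also have "\<dots> = CW" using p by simp
  finally show ?thesis .
qed



lemma pointwise_F:
  fixes A :: real and g0 :: complex and r :: "int^'n \<Rightarrow> complex" and What :: "int^'n \<Rightarrow> complex"
    and G :: "'n \<Rightarrow> int^'n \<Rightarrow> complex" and I :: "'n set"
  assumes A: "0 \<le> A" and W: "\<forall>l. l \<noteq> 0 \<longrightarrow> cmod (What l) \<le> CW / normsqZ l" and fin: "finite I"
  shows "ennreal (cmod (complex_of_real A * cnj g0 * complex_of_real A *
        (\<Sum>i\<in>I. (\<Sum>\<^sub>\<infinity>l\<in>UNIV - {0}. r l * What l * of_int (l$i) * G i l))))
     \<le> (\<Sum>i\<in>I. ennreal (A * cmod g0) * (ennreal A * (\<integral>\<^sup>+l. ennreal (CW * cmod (r l)) * ennreal (cmod (G i l)) \<partial>CS)))"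
proof -
  define S where "S i = (\<Sum>\<^sub>\<infinity>l\<in>UNIV - {0}. r l * What l * of_int (l$i) * G i l)" for i
  define N where "N i = (\<integral>\<^sup>+l. ennreal (CW * cmod (r l)) * ennreal (cmod (G i l)) \<partial>CS)" for i
  have Si: "ennreal (cmod (S i)) \<le> N i" for i
  proof -
    have "ennreal (cmod (S i)) \<le> (\<integral>\<^sup>+l. ennreal (cmod (r l * What l * of_int (l$i) * G i l)) \<partial>count_space (UNIV - {0}))"
      unfolding S_def by (rule norm_infsum_nn)
    also have "\<dots> = (\<integral>\<^sup>+l. ennreal (cmod (r l * What l * of_int (l$i) * G i l)) * indicator (UNIV - {0}) l \<partial>CS)"
      by (rule nn_integral_count_space_indicator) simp
    also have "\<dots> \<le> N i" unfolding N_def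
    proof (intro nn_integral_mono)
      fix l :: "int^'n"
      show "ennreal (cmod (r l * What l * of_int (l$i) * G i l)) * indicator (UNIV - {0}) l
          \<le> ennreal (CW * cmod (r l)) * ennreal (cmod (G i l))"
      proof (cases "l = 0")
        case True then show ?thesis by simp
      next
        case False
        have "cmod (r l * What l * of_int (l$i) * G i l) = cmod (r l) * (cmod (What l) * \<bar>real_of_int (l$i)\<bar>) * cmod (G i l)"
          by (simp add: norm_mult mult_ac)
        also have "\<dots> \<le> cmod (r l) * CW * cmod (G i l)"
          by (intro mult_right_mono mult_left_mono W_bound[OF W False]) auto
        finally have "ennreal (cmod (r l * What l * of_int (l$i) * G i l)) \<le> ennreal (CW * cmod (r l) * cmod (G i l))"
          by (intro ennreal_leI) (simp add: mult_ac)
        also have "\<dots> = ennreal (CW * cmod (r l)) * ennreal (cmod (G i l))"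
          by (simp add: ennreal_mult'' mult_ac)
        finally show ?thesis using False by simp
      qed
    qed
    finally show ?thesis .
  qed
  have "ennreal (cmod (complex_of_real A * cnj g0 * complex_of_real A * (\<Sum>i\<in>I. S i)))
      = ennreal (A * cmod g0) * ennreal A * ennreal (cmod (\<Sum>i\<in>I. S i))"
    using A by (simp add: norm_mult ennreal_mult'' mult_ac ennreal_mult)
  also have "\<dots> \<le> ennreal (A * cmod g0) * ennreal A * (\<Sum>i\<in>I. N i)"
  proof (intro mult_left_mono)
    have "ennreal (cmod (\<Sum>i\<in>I. S i)) \<le> ennreal (\<Sum>i\<in>I. cmod (S i))"
      by (intro ennreal_leI norm_sum)
    also have "\<dots> = (\<Sum>i\<in>I. ennreal (cmod (S i)))"
      by (rule sum_ennreal[symmetric]) simp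
    also have "\<dots> \<le> (\<Sum>i\<in>I. N i)" by (intro sum_mono Si)
    finally show "ennreal (cmod (\<Sum>i\<in>I. S i)) \<le> (\<Sum>i\<in>I. N i)" .
  qed simp
  also have "\<dots> = (\<Sum>i\<in>I. ennreal (A * cmod g0) * (ennreal A * N i))"
    by (simp only: sum_distrib_left) (simp add: mult_ac)
  finally show ?thesis unfolding S_def N_def .
qed



lemma main_bound:
  fixes lam sig s CW Lw :: real and What r :: "int^'n \<Rightarrow> complex" and alpha :: "nat^'n"
    and Df :: "nat^'n \<Rightarrow> int^'n \<Rightarrow> real^'n \<Rightarrow> complex"
  assumes lam: "0 < lam" and sig: "0 \<le> sig" and s: "0 < s" "s \<le> 1" and CW: "0 \<le> CW"
    and W: "\<forall>l. l \<noteq> 0 \<longrightarrow> cmod (What l) \<le> CW / normsqZ l"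
    and hyp: "\<forall>beta \<in> insert alpha {mi_sub_unit alpha i | i. 1 \<le> alpha$i}.
        (\<forall>k. integrable lborel (\<lambda>eta. (cmod (Df beta k eta))^2 * (Aw lam sig s k eta)^2)) \<and>
        (\<lambda>k. LINT eta | lborel. (cmod (Df beta k eta))^2 * (Aw lam sig s k eta)^2) summable_on UNIV"
    and rs: "(\<lambda>k. (cmod (r k))^2 * (jbr k powr sig * exp (lam * jbr k powr s))^2) summable_on UNIV"
    and Lw: "(\<integral>\<^sup>+(l::int^'n). ennreal ((jbr l powr (-sig))\<^sup>2) \<partial>CS) = ennreal Lw" "0 \<le> Lw"
  shows "cmod (E_NL lam sig s r What alpha Df)
     \<le> sqrt (4 * (2 powr sig)\<^sup>2 * Lw * CW\<^sup>2) * sqrt (gnorm_sq lam sig s (Df alpha)) * sqrt (rho_norm_sq lam sig s r) *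
           (\<Sum>i\<in>{i. 1 \<le> alpha$i}. sqrt (gnorm_sq lam sig s (Df (mi_sub_unit alpha i))))"
proof -
  define I where "I = {i. 1 \<le> alpha$i}"
  define K where "K = 4 * (2 powr sig)\<^sup>2 * Lw * CW\<^sup>2"
  define A where "A (k::int^'n) (eta::real^'n) = Aw lam sig s k eta" for k eta
  define g0 where "g0 = Df alpha"
  define G where "G i = Df (mi_sub_unit alpha i)" for i
  define R where "R = rho_norm_sq lam sig s r"
  define N where "N i k eta = (\<integral>\<^sup>+l. ennreal (CW * cmod (r l)) * ennreal (cmod (G i (k - l) eta)) \<partial>CS)" for i k eta
  define X where "X i = (\<integral>\<^sup>+k. \<integral>\<^sup>+eta. ennreal (A k eta * cmod (g0 k eta)) * (ennreal (A k eta) * N i k eta) \<partial>lborel \<partial>CS)" for i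
  have finI: "finite I" by simp
  have sf: "sigma_finite_measure lborel" by (rule lborel.sigma_finite_measure_axioms)
  have K0: "0 \<le> K" unfolding K_def using Lw by simp
  have R0: "0 \<le> R" unfolding R_def by (rule rho_nonneg)
  have nn: "0 \<le> gnorm_sq lam sig s g0 * (K * R * gnorm_sq lam sig s (G i))" for i
    using K0 R0 gnorm_nonneg[of lam sig s g0] gnorm_nonneg[of lam sig s "G i"] by simp
  have A0: "0 \<le> A k eta" for k eta unfolding A_def using Aw_pos[of lam sig s k eta] by simp
  have h0: "(\<forall>k. integrable lborel (\<lambda>eta. (cmod (g0 k eta))^2 * (Aw lam sig s k eta)^2)) \<and>
        (\<lambda>k. LINT eta | lborel. (cmod (g0 k eta))^2 * (Aw lam sig s k eta)^2) summable_on UNIV"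
    using hyp unfolding g0_def by blast
  have hi: "(\<forall>k. integrable lborel (\<lambda>eta. (cmod (G i k eta))^2 * (Aw lam sig s k eta)^2)) \<and>
        (\<lambda>k. LINT eta | lborel. (cmod (G i k eta))^2 * (Aw lam sig s k eta)^2) summable_on UNIV" if "i \<in> I" for i
    using hyp that unfolding G_def I_def by blast
  have m0: "(\<lambda>eta. cmod (g0 k eta)) \<in> borel_measurable lborel" for k
    by (rule cmod_meas) (use h0 in blast)
  have mi: "(\<lambda>eta. cmod (G i k eta)) \<in> borel_measurable lborel" if "i \<in> I" for i k
    by (rule cmod_meas) (use hi[OF that] in blast)
  have Nm: "(\<lambda>eta. N i k eta) \<in> borel_measurable lborel" if "i \<in> I" for i k
    unfolding N_def by (rule meas_count2) (use mi[OF that] in measurable)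
  have Xm: "(\<lambda>eta. ennreal (A k eta * cmod (g0 k eta)) * (ennreal (A k eta) * N i k eta)) \<in> borel_measurable lborel"
    if "i \<in> I" for i k
    using m0 Nm[OF that] Aw_meas unfolding A_def by measurable
  have m1: "(\<lambda>eta. ennreal (A k eta * cmod (g0 k eta))) \<in> borel_measurable lborel" for k
    using m0 Aw_meas unfolding A_def by measurable
  have m2: "(\<lambda>eta. ennreal (A k eta) * N i k eta) \<in> borel_measurable lborel" if "i \<in> I" for i k
    using Nm[OF that] Aw_meas unfolding A_def by measurable
  have G0e: "ennreal (gnorm_sq lam sig s g0) = (\<integral>\<^sup>+k. \<integral>\<^sup>+eta. (ennreal (A k eta * cmod (g0 k eta)))\<^sup>2 \<partial>lborel \<partial>CS)"
  proof -
    have "ennreal (gnorm_sq lam sig s g0) = (\<integral>\<^sup>+k. \<integral>\<^sup>+eta. ennreal ((cmod (g0 k eta))\<^sup>2 * (Aw lam sig s k eta)\<^sup>2) \<partial>lborel \<partial>CS)"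
      by (rule gnorm_nn) (use h0 in auto)
    also have "\<dots> = (\<integral>\<^sup>+k. \<integral>\<^sup>+eta. (ennreal (A k eta * cmod (g0 k eta)))\<^sup>2 \<partial>lborel \<partial>CS)"
      using A0 by (intro nn_integral_cong) (simp add: ennreal_power power_mult_distrib A_def mult.commute)
    finally show ?thesis .
  qed
  have Gie: "ennreal (gnorm_sq lam sig s (G i)) = (\<integral>\<^sup>+k. \<integral>\<^sup>+eta. ennreal ((cmod (G i k eta))\<^sup>2 * (Aw lam sig s k eta)\<^sup>2) \<partial>lborel \<partial>CS)"
    if "i \<in> I" for i
    by (rule gnorm_nn) (use hi[OF that] in auto)
  have Re: "ennreal R = (\<integral>\<^sup>+l. ennreal ((cmod (r l))\<^sup>2 * (jbr l powr sig * exp (lam * jbr l powr s))\<^sup>2) \<partial>CS)"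
    unfolding R_def rho_norm_sq_def by (rule ennreal_infsum_nn[OF rs]) auto
  have E1: "ennreal (cmod (E_NL lam sig s r What alpha Df)) \<le> (\<Sum>i\<in>I. X i)"
  proof -
    define F where "F k eta = complex_of_real (Aw lam sig s k eta) * cnj (Df alpha k eta) *
        complex_of_real (Aw lam sig s k eta) *
        (\<Sum>i\<in>{i. 1 \<le> alpha$i}.
           (\<Sum>\<^sub>\<infinity>l\<in>UNIV - {0}. r l * What l * of_int (l$i) *
                Df (mi_sub_unit alpha i) (k - l) eta))" for k eta
    have "ennreal (cmod (E_NL lam sig s r What alpha Df)) \<le> (\<integral>\<^sup>+k. ennreal (cmod (LINT eta | lborel. F k eta)) \<partial>CS)"
      unfolding E_NL_def F_def by (rule norm_infsum_nn)
    also have "\<dots> \<le> (\<integral>\<^sup>+k. \<integral>\<^sup>+eta. ennreal (cmod (F k eta)) \<partial>lborel \<partial>CS)"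
      by (intro nn_integral_mono norm_integral_nn)
    also have "\<dots> \<le> (\<integral>\<^sup>+k. \<integral>\<^sup>+eta. (\<Sum>i\<in>I. ennreal (A k eta * cmod (g0 k eta)) * (ennreal (A k eta) * N i k eta)) \<partial>lborel \<partial>CS)"
    proof (intro nn_integral_mono)
      fix k eta
      show "ennreal (cmod (F k eta)) \<le> (\<Sum>i\<in>I. ennreal (A k eta * cmod (g0 k eta)) * (ennreal (A k eta) * N i k eta))"
        unfolding F_def A_def N_def g0_def G_def I_def
        by (rule pointwise_F[where G="\<lambda>i l. Df (mi_sub_unit alpha i) (k - l) eta"]) (use A0 W in \<open>auto simp: A_def\<close>)
    qed
    also have "\<dots> = (\<integral>\<^sup>+k. (\<Sum>i\<in>I. \<integral>\<^sup>+eta. ennreal (A k eta * cmod (g0 k eta)) * (ennreal (A k eta) * N i k eta) \<partial>lborel) \<partial>CS)"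
      by (intro nn_integral_cong nn_integral_sum) (use Xm in auto)
    also have "\<dots> = (\<Sum>i\<in>I. X i)"
      unfolding X_def by (rule nn_integral_sum) simp
    finally show ?thesis .
  qed
  have E2: "X i \<le> ennreal (sqrt (gnorm_sq lam sig s g0 * (K * R * gnorm_sq lam sig s (G i))))" if "i \<in> I" for i
  proof (rule sqrt_bound_ennreal)
    show "0 \<le> gnorm_sq lam sig s g0 * (K * R * gnorm_sq lam sig s (G i))"
      using K0 R0 gnorm_nonneg[of lam sig s g0] gnorm_nonneg[of lam sig s "G i"] by simp
    have "(X i)\<^sup>2 \<le> (\<integral>\<^sup>+k. \<integral>\<^sup>+eta. (ennreal (A k eta * cmod (g0 k eta)))\<^sup>2 \<partial>lborel \<partial>CS) *
           (\<integral>\<^sup>+k. \<integral>\<^sup>+eta. (ennreal (A k eta) * N i k eta)\<^sup>2 \<partial>lborel \<partial>CS)"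
      unfolding X_def by (rule CS_iter[OF sf]) (use m1 m2[OF that] in auto)
    also have "(\<integral>\<^sup>+k. \<integral>\<^sup>+eta. (ennreal (A k eta) * N i k eta)\<^sup>2 \<partial>lborel \<partial>CS)
        \<le> 4 * (ennreal (2 powr sig))\<^sup>2 * (\<integral>\<^sup>+(l::int^'n). ennreal ((jbr l powr (-sig))\<^sup>2) \<partial>CS)
       * (ennreal (CW\<^sup>2) * (\<integral>\<^sup>+l. ennreal ((cmod (r l))\<^sup>2 * (jbr l powr sig * exp (lam * jbr l powr s))\<^sup>2) \<partial>CS))
       * (\<integral>\<^sup>+k. \<integral>\<^sup>+eta. ennreal ((cmod (G i k eta))\<^sup>2 * (Aw lam sig s k eta)\<^sup>2) \<partial>lborel \<partial>CS)"
      unfolding A_def N_def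
      by (rule core_Q[where v="\<lambda>k eta. cmod (G i k eta)"]) (use lam sig s CW mi[OF that] in auto)
    also have "\<dots> = ennreal (K * R * gnorm_sq lam sig s (G i))"
      unfolding Lw(1) Re[symmetric] Gie[OF that, symmetric] K_def
      using Lw(2) R0 gnorm_nonneg[of lam sig s "G i"]
      by (simp add: ennreal_mult'' ennreal_power mult_ac)
    finally have "(X i)\<^sup>2 \<le> ennreal (gnorm_sq lam sig s g0) * ennreal (K * R * gnorm_sq lam sig s (G i))"
      unfolding G0e by (simp add: mult_left_mono)
    thus "(X i)\<^sup>2 \<le> ennreal (gnorm_sq lam sig s g0 * (K * R * gnorm_sq lam sig s (G i)))"
      using ennreal_mult[of "gnorm_sq lam sig s g0" "K * R * gnorm_sq lam sig s (G i)"] K0 R0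
        gnorm_nonneg[of lam sig s g0] gnorm_nonneg[of lam sig s "G i"] by simp
  qed
  have "ennreal (cmod (E_NL lam sig s r What alpha Df)) \<le> (\<Sum>i\<in>I. ennreal (sqrt (gnorm_sq lam sig s g0 * (K * R * gnorm_sq lam sig s (G i)))))"
    using E1 E2 by (meson order_trans sum_mono)
  also have "\<dots> = ennreal (\<Sum>i\<in>I. sqrt (gnorm_sq lam sig s g0 * (K * R * gnorm_sq lam sig s (G i))))"
    by (rule sum_ennreal) (use nn in simp)
  finally have "cmod (E_NL lam sig s r What alpha Df) \<le> (\<Sum>i\<in>I. sqrt (gnorm_sq lam sig s g0 * (K * R * gnorm_sq lam sig s (G i))))"
    by (subst (asm) ennreal_le_iff) (use nn in \<open>auto intro!: sum_nonneg\<close>)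
  also have "\<dots> = sqrt K * sqrt (gnorm_sq lam sig s g0) * sqrt R * (\<Sum>i\<in>I. sqrt (gnorm_sq lam sig s (G i)))"
    by (simp add: sum_distrib_left real_sqrt_mult mult_ac)
  finally show ?thesis unfolding K_def R_def I_def g0_def G_def .
qed


theorem mainTheorem9:
  fixes s sig CW :: real and What :: "int^'n \<Rightarrow> complex"
  assumes s: "0 < s" "s \<le> 1"
    and sig: "sig \<ge> real CARD('n) / 2 + 6"
    and W: "\<forall>l. l \<noteq> 0 \<longrightarrow> cmod (What l) \<le> CW / normsqZ l"
  shows "\<exists>C. \<forall>(lam::real) (alpha::nat^'n) (f::real^'n \<Rightarrow> real^'n \<Rightarrow> real) Df.
     0 < lam \<longrightarrow>
     (\<forall>x v i. f (x + (2*pi) *\<^sub>R axis i 1) v = f x v) \<longrightarrow>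
     set_integrable (lborel \<Otimes>\<^sub>M lborel) (torus_box \<times> UNIV) (\<lambda>(x,v). f x v) \<longrightarrow>
     is_deriv_family alpha f Df \<longrightarrow>
     (\<forall>beta \<in> insert alpha {mi_sub_unit alpha i | i. 1 \<le> alpha$i}.
        (\<forall>k. integrable lborel (\<lambda>eta. (cmod (Df beta k eta))^2 * (Aw lam sig s k eta)^2)) \<and>
        (\<lambda>k. LINT eta | lborel. (cmod (Df beta k eta))^2 * (Aw lam sig s k eta)^2) summable_on UNIV) \<longrightarrow>
     (\<lambda>k. (cmod (rhohat f k))^2 * (jbr k powr sig * exp (lam * jbr k powr s))^2) summable_on UNIV \<longrightarrow>
     cmod (E_NL lam sig s (rhohat f) What alpha Df)
       \<le> C * sqrt (gnorm_sq lam sig s (Df alpha)) * sqrt (rho_norm_sq lam sig s (rhohat f)) *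
           (\<Sum>i\<in>{i. 1 \<le> alpha$i}. sqrt (gnorm_sq lam sig s (Df (mi_sub_unit alpha i))))"
proof -
  have sig0: "0 \<le> sig" using sig by (smt (verit) of_nat_0_le_iff divide_nonneg_nonneg)
  have sigd: "sig > real CARD('n) / 2" using sig by simp
  have CW0: "0 \<le> CW"
  proof -
    define l :: "int^'n" where "l = (\<chi> i. 1)"
    have l: "l \<noteq> 0" unfolding l_def by (simp add: vec_eq_iff)
    have "0 \<le> cmod (What l)" by simp
    also have "\<dots> \<le> CW / normsqZ l" using W l by blast
    finally show ?thesis using normsqZ_pos[OF l] by (simp add: zero_le_divide_iff)
  qed
  define Lw where "Lw = infsum (\<lambda>l::int^'n. (jbr l powr (-sig))\<^sup>2) UNIV"
  have Lw: "(\<integral>\<^sup>+(l::int^'n). ennreal ((jbr l powr (-sig))\<^sup>2) \<partial>CS) = ennreal Lw"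
    unfolding Lw_def by (rule ennreal_infsum_nn[symmetric, OF lattice_summable[OF sigd]]) auto
  have Lw0: "0 \<le> Lw" unfolding Lw_def by (intro infsum_nonneg) auto
  show ?thesis
  proof (intro exI allI impI)
    fix lam :: real and alpha :: "nat^'n" and f :: "real^'n \<Rightarrow> real^'n \<Rightarrow> real"
      and Df :: "nat^'n \<Rightarrow> int^'n \<Rightarrow> real^'n \<Rightarrow> complex"
    assume lam: "0 < lam"
      and hyp: "\<forall>beta \<in> insert alpha {mi_sub_unit alpha i | i. 1 \<le> alpha$i}.
        (\<forall>k. integrable lborel (\<lambda>eta. (cmod (Df beta k eta))^2 * (Aw lam sig s k eta)^2)) \<and>
        (\<lambda>k. LINT eta | lborel. (cmod (Df beta k eta))^2 * (Aw lam sig s k eta)^2) summable_on UNIV"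
      and rs: "(\<lambda>k. (cmod (rhohat f k))^2 * (jbr k powr sig * exp (lam * jbr k powr s))^2) summable_on UNIV"
    show "cmod (E_NL lam sig s (rhohat f) What alpha Df)
       \<le> sqrt (4 * (2 powr sig)\<^sup>2 * Lw * CW\<^sup>2) * sqrt (gnorm_sq lam sig s (Df alpha)) * sqrt (rho_norm_sq lam sig s (rhohat f)) *
           (\<Sum>i\<in>{i. 1 \<le> alpha$i}. sqrt (gnorm_sq lam sig s (Df (mi_sub_unit alpha i))))"
      by (rule main_bound[OF lam sig0 s CW0 W hyp rs Lw Lw0])
  qed
qed

end
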